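(* Let $K=\{\sum_{i=1}^\infty a_i3^{-i}: a_i\in\{0,1\}\text{ for all } i\ge1\}$, and define $f,g\colon K\to\mathbb{R}$ by $f(x)=\sum_{i=1}^\infty a_{2i-1}3^{-i}$ and $g(x)=\sum_{i=1}^\infty a_{2i}3^{-i}$ for $x=\sum_{i=1}^\infty a_i3^{-i}\in K$. Then $f,g$ are continuous and \[ \overline{\dim}_B\operatorname{graph}(f+g)=\frac12+\frac{\log 2}{\log 3}>1,\qquad \overline{\dim}_B\operatorname{graph}(f)=\overline{\dim}_B\operatorname{graph}(g)=\frac{\log 8}{\log 9}<1. \]
   Context: $\operatorname{graph}(h)=\{(x,h(x)):x\in K\}\subset\mathbb{R}^2$ with the Euclidean metric. $\overline{\dim}_B$ denotes upper box dimension: for a non-empty bounded $X$, $\overline{\dim}_B X=\limsup_n \frac{\log N_n(X)}{n\log 2}$, where $N_n(X)$ is the maximal cardinality of a subset of $X$ whose points are pairwise at distance $>2^{-n}$. *)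

theory Defs
  imports "HOL-Analysis.Analysis" "HOL-Library.Liminf_Limsup"
begin

text \<open>Digit sequences are a :: nat => bool, where a i encodes the paper's digit a_(i+1).\<close>

definition digit :: "bool \<Rightarrow> real" where
  "digit b = (if b then 1 else 0)"

definition cantor_pt :: "(nat \<Rightarrow> bool) \<Rightarrow> real" where
  "cantor_pt a = (\<Sum>i. digit (a i) / 3 ^ (i + 1))"

definition cantorK :: "real set" where
  "cantorK = range cantor_pt"

definition cantor_f :: "real \<Rightarrow> real" where
  "cantor_f x = (THE y. \<exists>a. x = cantor_pt a \<and> y = (\<Sum>j. digit (a (2 * j)) / 3 ^ (j + 1)))"

definition cantor_g :: "real \<Rightarrow> real" where
  "cantor_g x = (THE y. \<exists>a. x = cantor_pt a \<and> y = (\<Sum>j. digit (a (2 * j + 1)) / 3 ^ (j + 1)))"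

definition graph_on :: "real set \<Rightarrow> (real \<Rightarrow> real) \<Rightarrow> (real \<times> real) set" where
  "graph_on A h = {(x, h x) | x. x \<in> A}"

definition sep_number :: "'a::metric_space set \<Rightarrow> nat \<Rightarrow> nat" where
  "sep_number X n = Sup {card S | S. finite S \<and> S \<subseteq> X \<and>
      (\<forall>x\<in>S. \<forall>y\<in>S. x \<noteq> y \<longrightarrow> dist x y > (1/2) ^ n)}"

definition upper_box_dim :: "'a::metric_space set \<Rightarrow> ereal" where
  "upper_box_dim X = limsup (\<lambda>n. ereal (ln (real (sep_number X n)) / (real n * ln 2)))"

end

theory Submission
  imports Defs
begin

lemma digit_bounds: "0 \<le> digit b" "digit b \<le> 1"
  by (auto simp: digit_def)

lemma summable_scaled:
  fixes c :: "nat \<Rightarrow> real"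
  assumes "\<And>i. \<bar>c i\<bar> \<le> D"
  shows "summable (\<lambda>i. c i / 3^(i+1))"
proof (rule summable_comparison_test')
  show "summable (\<lambda>i. D / 3 * (1/3)^i)"
    by (intro summable_mult summable_geometric) auto
  fix n
  have "\<bar>c n\<bar> / 3^(n+1) \<le> D / 3^(n+1)"
    using assms by (intro divide_right_mono) auto
  then show "norm (c n / 3^(n+1)) \<le> D / 3 * (1/3)^n"
    by (simp add: power_divide field_simps)
qed

lemma tail_bound:
  fixes c :: "nat \<Rightarrow> real"
  assumes "\<And>i. \<bar>c i\<bar> \<le> D" and "\<And>i. i < L \<Longrightarrow> c i = 0"
  shows "\<bar>\<Sum>i. c i / 3^(i+1)\<bar> \<le> D / (2 * 3^L)"
proof -
  have s: "summable (\<lambda>i. c i / 3^(i+1))" by (rule summable_scaled[OF assms(1)])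
  have "(\<Sum>i. c i / 3^(i+1)) = (\<Sum>i. c (i+L) / 3^(i+L+1)) + (\<Sum>i<L. c i / 3^(i+1))"
    using suminf_split_initial_segment[OF s, of L] by simp
  also have "(\<Sum>i<L. c i / 3^(i+1)) = 0" using assms(2) by simp
  finally have eq: "(\<Sum>i. c i / 3^(i+1)) = (\<Sum>i. c (i+L) / 3^(i+L+1))" by simp
  have s2: "summable (\<lambda>i. c (i+L) / 3^(i+L+1))"
    using summable_ignore_initial_segment[OF s, of L] by simp
  have g: "(\<lambda>i. D / 3^(L+1) * (1/3)^i) sums (D / 3^(L+1) * (1 / (1 - 1/3)))"
    by (intro sums_mult geometric_sums) auto
  have sa: "summable (\<lambda>i. \<bar>c (i+L) / 3^(i+L+1)\<bar>)"
  proof -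
    have "summable (\<lambda>i. \<bar>c i\<bar> / 3^(i+1))" by (rule summable_scaled[of _ D]) (use assms in auto)
    from summable_ignore_initial_segment[OF this, of L] show ?thesis by (simp add: abs_divide)
  qed
  have "\<bar>\<Sum>i. c (i+L) / 3^(i+L+1)\<bar> \<le> (\<Sum>i. \<bar>c (i+L) / 3^(i+L+1)\<bar>)"
    by (rule summable_rabs[OF sa])
  also have "\<dots> \<le> (\<Sum>i. D / 3^(L+1) * (1/3)^i)"
  proof (rule suminf_le)
    fix n
    have "\<bar>c (n+L)\<bar> / 3^(n+L+1) \<le> D / 3^(n+L+1)"
      using assms by (intro divide_right_mono) auto
    then show "\<bar>c (n+L) / 3^(n+L+1)\<bar> \<le> D / 3^(L+1) * (1/3)^n"
      by (simp add: power_divide power_add field_simps)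
  next
    show "summable (\<lambda>n. \<bar>c (n+L) / 3^(n+L+1)\<bar>)" by (rule sa)
  next
    show "summable (\<lambda>i. D / 3^(L+1) * (1/3)^i)" using g by (rule sums_summable)
  qed
  also have "\<dots> = D / (2 * 3^L)" using sums_unique[OF g] by (simp add: field_simps)
  finally show ?thesis using eq by simp
qed
lemma cp_summable: "summable (\<lambda>i. digit (a i) / 3^(i+1))"
  by (rule summable_scaled[of _ 1]) (auto simp: digit_def)

lemma cp_diff: "cantor_pt a - cantor_pt b = (\<Sum>i. (digit (a i) - digit (b i)) / 3^(i+1))"
  unfolding cantor_pt_def
  using suminf_diff[OF cp_summable[of a] cp_summable[of b]] by (simp add: diff_divide_distrib)

lemma cp_close:
  assumes "\<And>i. i < L \<Longrightarrow> a i = b i"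
  shows "\<bar>cantor_pt a - cantor_pt b\<bar> \<le> 1 / (2 * 3^L)"
  unfolding cp_diff
  by (rule tail_bound) (use assms in \<open>auto simp: digit_def\<close>)

lemma cp_sep:
  assumes "\<And>i. i < i0 \<Longrightarrow> a i = b i" and "a i0 \<noteq> b i0"
  shows "\<bar>cantor_pt a - cantor_pt b\<bar> \<ge> 1 / (2 * 3^(i0+1))"
proof -
  define c where "c i = digit (a i) - digit (b i)" for i
  define c' where "c' i = (if i = i0 then 0 else c i)" for i
  have s1: "summable (\<lambda>i. c' i / 3^(i+1))"
    by (rule summable_scaled[of _ 1]) (auto simp: c'_def c_def digit_def)
  have s2: "(\<lambda>i. if i = i0 then c i / 3^(i+1) else 0) sums (c i0 / 3^(i0+1))"
    by (rule sums_single)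
  have "(\<lambda>i. c' i / 3^(i+1) + (if i = i0 then c i / 3^(i+1) else 0)) sums
        ((\<Sum>i. c' i / 3^(i+1)) + c i0 / 3^(i0+1))"
    by (intro sums_add s2 summable_sums s1)
  moreover have "(\<lambda>i. c' i / 3^(i+1) + (if i = i0 then c i / 3^(i+1) else 0)) = (\<lambda>i. c i / 3^(i+1))"
    by (auto simp: c'_def)
  ultimately have eq: "cantor_pt a - cantor_pt b = (\<Sum>i. c' i / 3^(i+1)) + c i0 / 3^(i0+1)"
    unfolding cp_diff c_def[symmetric] by (simp add: sums_iff)
  have tb: "\<bar>\<Sum>i. c' i / 3^(i+1)\<bar> \<le> 1 / (2 * 3^(i0+1))"
    by (rule tail_bound) (use assms in \<open>auto simp: c'_def c_def digit_def\<close>)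
  have ci0: "\<bar>c i0\<bar> = 1" using assms(2) by (auto simp: c_def digit_def)
  have "\<bar>c i0 / 3^(i0+1)\<bar> = 1 / 3^(i0+1)" using ci0 by (simp add: abs_divide)
  moreover have "(1::real) / (2 * 3^(i0+1)) = (1 / 3^(i0+1)) / 2" by simp
  moreover have key: "\<And>x t e::real. \<bar>t\<bar> = e \<Longrightarrow> \<bar>x\<bar> \<le> e/2 \<Longrightarrow> \<bar>x + t\<bar> \<ge> e/2" by linarith
  ultimately show ?thesis using eq tb key by metis
qed

lemma first_diff:
  fixes a b :: "nat \<Rightarrow> 'x"
  assumes "a \<noteq> b"
  shows "\<exists>i0. (\<forall>i<i0. a i = b i) \<and> a i0 \<noteq> b i0"
proof -
  from assms obtain j where "a j \<noteq> b j" by auto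
  then have "\<exists>j. a j \<noteq> b j" by auto
  from exists_least_iff[THEN iffD1, OF this] show ?thesis by auto
qed

lemma cp_inj: "inj cantor_pt"
proof (rule injI, rule ccontr)
  fix a b assume eq: "cantor_pt a = cantor_pt b" and ne: "a \<noteq> b"
  from first_diff[OF ne] obtain i0 where "\<forall>i<i0. a i = b i" "a i0 \<noteq> b i0" by blast
  from cp_sep[of i0 a b] this have "\<bar>cantor_pt a - cantor_pt b\<bar> \<ge> 1 / (2 * 3^(i0+1))" by auto
  moreover have "(1::real) / (2 * 3^(i0+1)) > 0" by simp
  ultimately show False using eq by linarith
qed

definition Hf :: "(nat \<Rightarrow> bool) \<Rightarrow> real" where "Hf a = cantor_pt (\<lambda>j. a (2*j))"
definition Hg :: "(nat \<Rightarrow> bool) \<Rightarrow> real" where "Hg a = cantor_pt (\<lambda>j. a (2*j+1))"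

lemma cf_eq: "cantor_f (cantor_pt a) = Hf a"
  unfolding cantor_f_def Hf_def
proof (rule the_equality)
  show "\<exists>a'. cantor_pt a = cantor_pt a' \<and> cantor_pt (\<lambda>j. a (2 * j)) = (\<Sum>j. digit (a' (2 * j)) / 3 ^ (j + 1))"
    by (auto simp: cantor_pt_def)
  fix y assume "\<exists>a'. cantor_pt a = cantor_pt a' \<and> y = (\<Sum>j. digit (a' (2 * j)) / 3 ^ (j + 1))"
  then obtain a' where "cantor_pt a = cantor_pt a'" "y = (\<Sum>j. digit (a' (2 * j)) / 3 ^ (j + 1))" by blast
  with cp_inj have "a = a'" by (auto dest: injD)
  with \<open>y = _\<close> show "y = cantor_pt (\<lambda>j. a (2 * j))" by (simp add: cantor_pt_def)
qed

lemma cg_eq: "cantor_g (cantor_pt a) = Hg a"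
  unfolding cantor_g_def Hg_def
proof (rule the_equality)
  show "\<exists>a'. cantor_pt a = cantor_pt a' \<and> cantor_pt (\<lambda>j. a (2 * j+1)) = (\<Sum>j. digit (a' (2 * j+1)) / 3 ^ (j + 1))"
    by (auto simp: cantor_pt_def)
  fix y assume "\<exists>a'. cantor_pt a = cantor_pt a' \<and> y = (\<Sum>j. digit (a' (2 * j+1)) / 3 ^ (j + 1))"
  then obtain a' where "cantor_pt a = cantor_pt a'" "y = (\<Sum>j. digit (a' (2 * j+1)) / 3 ^ (j + 1))" by blast
  with cp_inj have "a = a'" by (auto dest: injD)
  with \<open>y = _\<close> show "y = cantor_pt (\<lambda>j. a (2 * j+1))" by (simp add: cantor_pt_def)
qed
lemma agree_of_close:
  assumes "\<bar>cantor_pt a - cantor_pt b\<bar> < 1/(2*3^L)" and "i < L"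
  shows "a i = b i"
proof (rule ccontr)
  assume ne: "a i \<noteq> b i"
  then have "a \<noteq> b" by auto
  from first_diff[OF this] obtain i0 where h: "\<forall>i<i0. a i = b i" "a i0 \<noteq> b i0" by blast
  have "i0 \<le> i" using h ne not_le by blast
  then have "(3::real)^(i0+1) \<le> 3^L" using assms(2) by (intro power_increasing) auto
  then have "1/(2*3^L) \<le> (1::real)/(2*3^(i0+1))" by (intro divide_left_mono) auto
  moreover have "\<bar>cantor_pt a - cantor_pt b\<bar> \<ge> 1 / (2 * 3^(i0+1))" using cp_sep h by blast
  ultimately show False using assms(1) by linarith
qed

lemma cont_gen:
  assumes hh: "\<And>a. h (cantor_pt a) = cantor_pt (\<lambda>j. a (\<sigma> j))" and sig: "\<And>j. \<sigma> j < 2*j + 2"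
  shows "continuous_on cantorK h"
  unfolding continuous_on_iff cantorK_def
proof (intro ballI allI impI)
  fix x e :: real assume "x \<in> range cantor_pt" "0 < e"
  then obtain a where xa: "x = cantor_pt a" by auto
  obtain M where M: "(1/3::real)^M < e" using real_arch_pow_inv[OF \<open>0 < e\<close>, of "1/3"] by auto
  have "1/(2*3^M) \<le> (1/3::real)^M" by (simp add: power_divide field_simps)
  with M have M': "1/(2*3^M) < e" by linarith
  show "\<exists>d>0. \<forall>x'\<in>range cantor_pt. dist x' x < d \<longrightarrow> dist (h x') (h x) < e"
  proof (intro exI[of _ "1/(2*3^(2*M))"] conjI ballI impI)
    show "0 < 1/(2*3^(2*M)::real)" by simp
    fix x' assume "x' \<in> range cantor_pt" "dist x' x < 1/(2*3^(2*M))"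
    then obtain b where xb: "x' = cantor_pt b" and d: "\<bar>cantor_pt b - cantor_pt a\<bar> < 1/(2*3^(2*M))"
      using xa by (auto simp: dist_real_def)
    have ag: "b i = a i" if "i < 2*M" for i using agree_of_close[OF d that] .
    have "\<bar>cantor_pt (\<lambda>j. b (\<sigma> j)) - cantor_pt (\<lambda>j. a (\<sigma> j))\<bar> \<le> 1/(2*3^M)"
    proof (rule cp_close)
      fix j assume "j < M" then have "\<sigma> j < 2*M" using sig[of j] by linarith
      then show "b (\<sigma> j) = a (\<sigma> j)" using ag by blast
    qed
    then show "dist (h x') (h x) < e" using M' by (simp add: xa xb hh dist_real_def)
  qed
qed

lemma cont_f: "continuous_on cantorK cantor_f"
  by (rule cont_gen[where \<sigma>="\<lambda>j. 2*j"]) (auto simp: cf_eq Hf_def)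

lemma cont_g: "continuous_on cantorK cantor_g"
  by (rule cont_gen[where \<sigma>="\<lambda>j. 2*j+1"]) (auto simp: cg_eq Hg_def)
definition sepset :: "'a::metric_space set \<Rightarrow> nat \<Rightarrow> nat set" where
  "sepset X n = {card S | S. finite S \<and> S \<subseteq> X \<and>
      (\<forall>x\<in>S. \<forall>y\<in>S. x \<noteq> y \<longrightarrow> dist x y > (1/2) ^ n)}"

lemma sep_number_sepset: "sep_number X n = Sup (sepset X n)"
  unfolding sep_number_def sepset_def ..

lemma sepset_le:
  fixes Q :: "'b \<Rightarrow> 'a::metric_space" and \<psi> :: "'b \<Rightarrow> 'c"
  assumes fin: "finite (range \<psi>)"
    and close: "\<And>a b. \<psi> a = \<psi> b \<Longrightarrow> dist (Q a) (Q b) \<le> (1/2)^n"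
    and "m \<in> sepset (range Q) n"
  shows "m \<le> card (range \<psi>)"
proof -
  from assms(3) have "\<exists>S. m = card S \<and> finite S \<and> S \<subseteq> range Q \<and>
    (\<forall>x\<in>S. \<forall>y\<in>S. x \<noteq> y \<longrightarrow> dist x y > (1/2) ^ n)" unfolding sepset_def by simp
  then obtain S where S0: "m = card S \<and> finite S \<and> S \<subseteq> range Q \<and>
    (\<forall>x\<in>S. \<forall>y\<in>S. x \<noteq> y \<longrightarrow> dist x y > (1/2) ^ n)" by (rule exE)
  from S0 have S: "m = card S" "finite S" "S \<subseteq> range Q"
    "\<forall>x\<in>S. \<forall>y\<in>S. x \<noteq> y \<longrightarrow> dist x y > (1/2) ^ n" by simp_all
  define g where "g s = \<psi> (inv Q s)" for s
  have Qi: "Q (inv Q s) = s" if "s \<in> S" for s using S(3) that by (meson f_inv_into_f subsetD)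
  have "inj_on g S"
  proof (rule inj_onI, rule ccontr)
    fix s t assume st: "s \<in> S" "t \<in> S" "g s = g t" "s \<noteq> t"
    then have "\<psi> (inv Q s) = \<psi> (inv Q t)" by (simp add: g_def)
    then have "dist (Q (inv Q s)) (Q (inv Q t)) \<le> (1/2)^n" by (rule close)
    then have "dist s t \<le> (1/2)^n" using Qi st by simp
    with S(4) st show False by (meson not_le)
  qed
  then have "card S = card (g ` S)" by (simp add: card_image)
  also have "\<dots> \<le> card (range \<psi>)" by (intro card_mono fin) (unfold g_def, blast)
  finally show ?thesis using S by simp
qed

lemma sep_upper:
  fixes Q :: "'b \<Rightarrow> 'a::metric_space" and \<psi> :: "'b \<Rightarrow> 'c"
  assumes fin: "finite (range \<psi>)"
    and close: "\<And>a b. \<psi> a = \<psi> b \<Longrightarrow> dist (Q a) (Q b) \<le> (1/2)^n"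
  shows "bdd_above (sepset (range Q) n)" "sep_number (range Q) n \<le> card (range \<psi>)"
proof -
  show "bdd_above (sepset (range Q) n)"
    by (rule bdd_aboveI[of _ "card (range \<psi>)"]) (rule sepset_le[of \<psi> Q n, OF fin close])
  have "0 \<in> sepset (range Q) n" unfolding sepset_def mem_Collect_eq by (rule exI[of _ "{}"]) simp
  then have ne: "sepset (range Q) n \<noteq> {}" by auto
  show "sep_number (range Q) n \<le> card (range \<psi>)"
    unfolding sep_number_sepset by (rule cSup_least[OF ne]) (rule sepset_le[of \<psi> Q n, OF fin close])
qed

lemma sep_lower:
  assumes "bdd_above (sepset X n)" "finite S" "S \<subseteq> X"
    "\<forall>x\<in>S. \<forall>y\<in>S. x \<noteq> y \<longrightarrow> dist x y > (1/2) ^ n"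
  shows "card S \<le> sep_number X n"
  unfolding sep_number_sepset
  apply (rule cSup_upper[OF _ assms(1)])
  unfolding sepset_def mem_Collect_eq
  apply (rule exI[of _ S])
  using assms(2-4) by simp
lemma geo_sum: "m \<le> L \<Longrightarrow> (\<Sum>j\<in>{m..<L}. 2 / 3^(j+1) :: real) = 1/3^m - 1/3^L"
proof (induct L rule: dec_induct)
  case base then show ?case by simp
next
  case (step n)
  have "(\<Sum>j\<in>{m..<Suc n}. 2 / 3^(j+1) :: real) = (\<Sum>j\<in>{m..<n}. 2 / 3^(j+1)) + 2 / 3^(n+1)"
    using step(1) by (simp add: sum.atLeastLessThan_Suc)
  also have "\<dots> = 1/3^m - 1/3^n + 2 / 3^(n+1)" using step(3) by simp
  also have "(1::real)/3^n = 3 / 3^(n+1)" by simp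
  finally show ?case by simp
qed

lemma fin_lower:
  fixes e :: "nat \<Rightarrow> real"
  assumes b: "\<And>j. \<bar>e j\<bar> \<le> 2" and z1: "\<And>j. j < p \<Longrightarrow> e j = 0"
    and z2: "\<And>j. j \<ge> L \<Longrightarrow> e j = 0" and e0: "\<bar>e p\<bar> \<ge> 1" and jL: "p < L"
  shows "\<bar>\<Sum>j. e j / 3^(j+1)\<bar> \<ge> 1 / 3^L"
proof -
  have "(\<Sum>j. e j / 3^(j+1)) = (\<Sum>j<L. e j / 3^(j+1))"
    by (rule suminf_finite) (auto simp: z2)
  also have "{..<L} = {..<Suc p} \<union> {Suc p..<L}" using jL by auto
  also have "(\<Sum>j\<in>{..<Suc p} \<union> {Suc p..<L}. e j / 3^(j+1)) =
      (\<Sum>j<Suc p. e j / 3^(j+1)) + (\<Sum>j\<in>{Suc p..<L}. e j / 3^(j+1))"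
    by (rule sum.union_disjoint) auto
  also have "(\<Sum>j<Suc p. e j / 3^(j+1)) = e p / 3^(p+1)"
    using z1 by simp
  finally have eq: "(\<Sum>j. e j / 3^(j+1)) = e p / 3^(p+1) + (\<Sum>j\<in>{Suc p..<L}. e j / 3^(j+1))" .
  have "\<bar>\<Sum>j\<in>{Suc p..<L}. e j / 3^(j+1)\<bar> \<le> (\<Sum>j\<in>{Suc p..<L}. \<bar>e j / 3^(j+1)\<bar>)"
    by (rule sum_abs)
  also have "\<dots> \<le> (\<Sum>j\<in>{Suc p..<L}. 2 / 3^(j+1))"
    by (intro sum_mono) (use b in \<open>auto simp: abs_divide intro: divide_right_mono\<close>)
  also have "\<dots> = 1/3^(Suc p) - 1/3^L" using jL by (intro geo_sum) auto
  finally have t: "\<bar>\<Sum>j\<in>{Suc p..<L}. e j / 3^(j+1)\<bar> \<le> 1/3^(p+1) - 1/3^L" by simp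
  have h: "\<bar>e p / 3^(p+1)\<bar> \<ge> 1/3^(p+1)"
    using e0 by (simp add: abs_divide divide_right_mono)
  show ?thesis unfolding eq using t h by linarith
qed

lemma dist_pair_le: "dist (x1::real, y1::real) (x2, y2) \<le> \<bar>x1 - x2\<bar> + \<bar>y1 - y2\<bar>"
  unfolding dist_Pair_Pair dist_real_def by (metis power2_abs sqrt_sum_squares_le_sum_abs)

lemma dist_pair_ge:
  fixes x1 y1 x2 y2 :: real
  shows "dist (x1, y1) (x2, y2) \<ge> \<bar>x1 - x2\<bar> \<and> dist (x1, y1) (x2, y2) \<ge> \<bar>y1 - y2\<bar>"
  using dist_fst_le[of "(x1,y1)" "(x2,y2)"] dist_snd_le[of "(x1,y1)" "(x2,y2)"]
  by (auto simp: dist_real_def)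

lemma upper_generic:
  fixes H :: "(nat \<Rightarrow> bool) \<Rightarrow> real" and \<psi> :: "(nat \<Rightarrow> bool) \<Rightarrow> 'c"
  assumes fin: "finite (range \<psi>)" and cq: "card (range \<psi>) \<le> q"
    and cl: "\<And>a b. \<psi> a = \<psi> b \<Longrightarrow> \<bar>cantor_pt a - cantor_pt b\<bar> + \<bar>H a - H b\<bar> \<le> 3 / (2 * 9^k)"
    and nk: "3 * 2^n \<le> (9::nat)^k"
  shows "bdd_above (sepset (range (\<lambda>a. (cantor_pt a, H a))) n)"
    "sep_number (range (\<lambda>a. (cantor_pt a, H a))) n \<le> q"
proof -
  have "real (3 * 2^n) \<le> real (9^k)" using nk by linarith
  then have nk': "3 * 2^n \<le> (9::real)^k" by simp
  have "(0::real) < 9^k" by simp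
  then have "(3::real) * 2^n \<le> 2 * 9^k" using nk' by linarith
  then have "3 / (2 * 9^k) \<le> ((1::real)/2)^n"
    by (simp add: power_divide field_simps)
  then have close: "\<psi> a = \<psi> b \<Longrightarrow> dist (cantor_pt a, H a) (cantor_pt b, H b) \<le> (1/2)^n" for a b
    using cl[of a b] dist_pair_le[of "cantor_pt a" "H a" "cantor_pt b" "H b"] by linarith
  show "bdd_above (sepset (range (\<lambda>a. (cantor_pt a, H a))) n)"
    by (rule sep_upper(1)[of \<psi>, OF fin]) (rule close)
  have "sep_number (range (\<lambda>a. (cantor_pt a, H a))) n \<le> card (range \<psi>)"
    by (rule sep_upper(2)[of \<psi>, OF fin]) (rule close)
  then show "sep_number (range (\<lambda>a. (cantor_pt a, H a))) n \<le> q" using cq by linarith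
qed

lemma lower_generic:
  fixes H :: "(nat \<Rightarrow> bool) \<Rightarrow> real" and A :: "(nat \<Rightarrow> bool) set"
  assumes fin: "finite A" and cq: "card A \<ge> q"
    and sp: "\<And>a b. a \<in> A \<Longrightarrow> b \<in> A \<Longrightarrow> a \<noteq> b \<Longrightarrow>
        \<bar>cantor_pt a - cantor_pt b\<bar> \<ge> 1 / (2 * 9^k) \<or> \<bar>H a - H b\<bar> \<ge> 1 / (2 * 9^k)"
    and nk: "2 * 9^k < (2::nat)^n"
    and bdd: "bdd_above (sepset (range (\<lambda>a. (cantor_pt a, H a))) n)"
  shows "q \<le> sep_number (range (\<lambda>a. (cantor_pt a, H a))) n"
proof -
  define Q where "Q a = (cantor_pt a, H a)" for a
  have "real (2 * 9^k) < real (2^n)" using nk by linarith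
  then have nk': "2 * 9^k < (2::real)^n" by simp
  have lt: "((1::real)/2)^n < 1 / (2 * 9^k)"
    using nk' by (simp add: power_divide field_simps)
  have sep: "dist (Q a) (Q b) > (1/2)^n" if "a \<in> A" "b \<in> A" "a \<noteq> b" for a b
    using sp[OF that] dist_pair_ge[of "cantor_pt a" "cantor_pt b" "H a" "H b"] lt
    unfolding Q_def by linarith
  have inj: "inj_on Q A"
  proof (rule inj_onI, rule ccontr)
    fix a b assume "a \<in> A" "b \<in> A" "Q a = Q b" "a \<noteq> b"
    with sep[of a b] show False by simp
  qed
  have "q \<le> card (Q ` A)" using cq card_image[OF inj] by simp
  also have "card (Q ` A) \<le> sep_number (range Q) n"
  proof (rule sep_lower)
    show "bdd_above (sepset (range Q) n)" using bdd unfolding Q_def .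
    show "finite (Q ` A)" using fin by simp
    show "Q ` A \<subseteq> range Q" by auto
    show "\<forall>x\<in>Q ` A. \<forall>y\<in>Q ` A. x \<noteq> y \<longrightarrow> (1 / 2) ^ n < dist x y"
      using sep by auto
  qed
  finally show ?thesis unfolding Q_def .
qed
definition Hr :: "nat \<Rightarrow> (nat \<Rightarrow> bool) \<Rightarrow> real" where "Hr r a = cantor_pt (\<lambda>j. a (2*j + r))"

definition psir :: "nat \<Rightarrow> nat \<Rightarrow> (nat \<Rightarrow> bool) \<Rightarrow> (nat \<Rightarrow> bool) \<times> (nat \<Rightarrow> bool)" where
  "psir k r a = (restrict a {..<2*k}, restrict (\<lambda>j. a (2*(j+k) + r)) {..<k})"

lemma card_bool_PiE: "card (PiE {..<m} (\<lambda>_. UNIV :: bool set)) = 2^m"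
  by (simp add: card_PiE)

lemma card_012_PiE: "card (PiE {..<m} (\<lambda>_. {0,1,2::nat})) = 3^m"
  by (simp add: card_PiE numeral_3_eq_3)

lemma restrict_eqD: "restrict f A = restrict g A \<Longrightarrow> i \<in> A \<Longrightarrow> f i = g i"
  by (metis restrict_apply')

lemma power9: "(3::real)^(2*k) = 9^k"
  by (simp add: power_mult)

lemma upper_r:
  assumes r: "r \<le> 1" and nk: "3 * 2^n \<le> (9::nat)^k"
  shows "bdd_above (sepset (range (\<lambda>a. (cantor_pt a, Hr r a))) n)"
    "sep_number (range (\<lambda>a. (cantor_pt a, Hr r a))) n \<le> 8^k"
proof -
  let ?D = "PiE {..<2*k} (\<lambda>_. UNIV :: bool set) \<times> PiE {..<k} (\<lambda>_. UNIV :: bool set)"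
  have sub: "range (psir k r) \<subseteq> ?D" unfolding psir_def by (intro subsetI, clarify, simp)
  have finD: "finite ?D" by (intro finite_cartesian_product finite_PiE) auto
  have cD: "card ?D = 8^k"
  proof -
    have "card ?D = 2^(2*k) * 2^k" by (simp add: card_cartesian_product card_bool_PiE)
    also have "(2::nat)^(2*k) = 4^k" by (simp add: power_mult)
    also have "(4::nat)^k * 2^k = 8^k" by (simp flip: power_mult_distrib)
    finally show ?thesis .
  qed
  have fin: "finite (range (psir k r))" using finite_subset[OF sub finD] .
  have cq: "card (range (psir k r)) \<le> 8^k" using card_mono[OF finD sub] cD by simp
  have cl: "\<bar>cantor_pt a - cantor_pt b\<bar> + \<bar>Hr r a - Hr r b\<bar> \<le> 3 / (2 * 9^k)"
    if "psir k r a = psir k r b" for a b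
  proof -
    from that have R1: "restrict a {..<2*k} = restrict b {..<2*k}"
      and R2: "restrict (\<lambda>j. a (2*(j+k) + r)) {..<k} = restrict (\<lambda>j. b (2*(j+k) + r)) {..<k}"
      unfolding psir_def by simp_all
    have e1: "a i = b i" if "i < 2*k" for i
      using restrict_eqD[OF R1, of i] that by simp
    have e2: "a (2*(j+k)+r) = b (2*(j+k)+r)" if "j < k" for j
      using restrict_eqD[OF R2, of j] that by simp
    have c1: "\<bar>cantor_pt a - cantor_pt b\<bar> \<le> 1 / (2 * 3^(2*k))"
      by (rule cp_close) (rule e1)
    have c2: "\<bar>Hr r a - Hr r b\<bar> \<le> 1 / (2 * 3^(2*k))"
      unfolding Hr_def
    proof (rule cp_close)
      fix j assume j: "j < 2*k"
      show "a (2*j + r) = b (2*j + r)"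
      proof (cases "j < k")
        case True then show ?thesis using e1 r by simp
      next
        case False
        define j' where "j' = j - k"
        have "j = j' + k" "j' < k" using j False unfolding j'_def by arith+
        then show ?thesis using e2[of j'] by (simp add: algebra_simps)
      qed
    qed
    show ?thesis using c1 c2 unfolding power9 by (simp add: field_simps)
  qed
  show "bdd_above (sepset (range (\<lambda>a. (cantor_pt a, Hr r a))) n)"
    by (rule upper_generic(1)[OF fin cq cl nk])
  show "sep_number (range (\<lambda>a. (cantor_pt a, Hr r a))) n \<le> 8^k"
    by (rule upper_generic(2)[OF fin cq cl nk])
qed
definition sF :: "(nat \<Rightarrow> bool) \<Rightarrow> nat \<Rightarrow> nat" where
  "sF a j = (if a (2*j) then 1 else 0) + (if a (2*j+1) then 1 else 0)"

definition HF :: "(nat \<Rightarrow> bool) \<Rightarrow> real" where "HF a = (\<Sum>j. real (sF a j) / 3^(j+1))"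

lemma sF_le: "sF a j \<le> 2" by (simp add: sF_def)

lemma HF_summable: "summable (\<lambda>j. real (sF a j) / 3^(j+1))"
  by (rule summable_scaled[of _ 2]) (simp add: sF_le)

lemma HF_eq: "cantor_f (cantor_pt a) + cantor_g (cantor_pt a) = HF a"
proof -
  have "cantor_f (cantor_pt a) + cantor_g (cantor_pt a) =
    (\<Sum>j. digit (a (2*j)) / 3^(j+1)) + (\<Sum>j. digit (a (2*j+1)) / 3^(j+1))"
    by (simp only: cf_eq cg_eq Hf_def Hg_def) (simp add: cantor_pt_def)
  also have "\<dots> = (\<Sum>j. digit (a (2*j)) / 3^(j+1) + digit (a (2*j+1)) / 3^(j+1))"
    using suminf_add[OF cp_summable[of "\<lambda>j. a (2*j)"] cp_summable[of "\<lambda>j. a (2*j+1)"]] by simp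
  also have "\<dots> = HF a" unfolding HF_def
    by (rule suminf_cong) (simp add: sF_def digit_def add_divide_distrib)
  finally show ?thesis .
qed

lemma HF_diff: "HF a - HF b = (\<Sum>j. (real (sF a j) - real (sF b j)) / 3^(j+1))"
  unfolding HF_def
  using suminf_diff[OF HF_summable[of a] HF_summable[of b]] by (simp add: diff_divide_distrib)

definition psiF :: "nat \<Rightarrow> (nat \<Rightarrow> bool) \<Rightarrow> (nat \<Rightarrow> bool) \<times> (nat \<Rightarrow> nat)" where
  "psiF k a = (restrict a {..<2*k}, restrict (\<lambda>j. sF a (j+k)) {..<k})"

lemma upper_F:
  assumes nk: "3 * 2^n \<le> (9::nat)^k"
  shows "bdd_above (sepset (range (\<lambda>a. (cantor_pt a, HF a))) n)"
    "sep_number (range (\<lambda>a. (cantor_pt a, HF a))) n \<le> 12^k"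
proof -
  let ?D = "PiE {..<2*k} (\<lambda>_. UNIV :: bool set) \<times> PiE {..<k} (\<lambda>_. {0,1,2::nat})"
  have sub: "range (psiF k) \<subseteq> ?D"
  proof
    fix x assume "x \<in> range (psiF k)"
    then obtain a where x: "x = psiF k a" by auto
    have "sF a (j+k) \<in> {0,1,2}" for j using sF_le[of a "j+k"] by auto
    then show "x \<in> ?D" unfolding x psiF_def by simp
  qed
  have finD: "finite ?D" by (intro finite_cartesian_product finite_PiE) auto
  have cD: "card ?D = 12^k"
  proof -
    have "card ?D = 2^(2*k) * 3^k" by (simp only: card_cartesian_product card_bool_PiE card_012_PiE)
    also have "(2::nat)^(2*k) = 4^k" by (simp add: power_mult)
    also have "(4::nat)^k * 3^k = 12^k" by (simp flip: power_mult_distrib)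
    finally show ?thesis .
  qed
  have fin: "finite (range (psiF k))" using finite_subset[OF sub finD] .
  have cq: "card (range (psiF k)) \<le> 12^k" using card_mono[OF finD sub] cD by simp
  have cl: "\<bar>cantor_pt a - cantor_pt b\<bar> + \<bar>HF a - HF b\<bar> \<le> 3 / (2 * 9^k)"
    if "psiF k a = psiF k b" for a b
  proof -
    from that have R1: "restrict a {..<2*k} = restrict b {..<2*k}"
      and R2: "restrict (\<lambda>j. sF a (j+k)) {..<k} = restrict (\<lambda>j. sF b (j+k)) {..<k}"
      unfolding psiF_def by simp_all
    have e1: "a i = b i" if "i < 2*k" for i
      using restrict_eqD[OF R1, of i] that by simp
    have e2: "sF a (j+k) = sF b (j+k)" if "j < k" for j
      using restrict_eqD[OF R2, of j] that by simp
    have c1: "\<bar>cantor_pt a - cantor_pt b\<bar> \<le> 1 / (2 * 3^(2*k))"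
      by (rule cp_close) (rule e1)
    have c2: "\<bar>HF a - HF b\<bar> \<le> 2 / (2 * 3^(2*k))"
      unfolding HF_diff
    proof (rule tail_bound)
      fix j show "\<bar>real (sF a j) - real (sF b j)\<bar> \<le> 2" using sF_le[of a j] sF_le[of b j] by linarith
    next
      fix j assume j: "j < 2*k"
      show "real (sF a j) - real (sF b j) = 0"
      proof (cases "j < k")
        case True
        then have "a (2*j) = b (2*j)" "a (2*j+1) = b (2*j+1)" using e1 by simp_all
        then show ?thesis by (simp add: sF_def)
      next
        case False
        define j' where "j' = j - k"
        have "j = j' + k" "j' < k" using j False unfolding j'_def by arith+
        then show ?thesis using e2[of j'] by simp
      qed
    qed
    show ?thesis using c1 c2 unfolding power9 by (simp add: field_simps)
  qed
  show "bdd_above (sepset (range (\<lambda>a. (cantor_pt a, HF a))) n)"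
    by (rule upper_generic(1)[OF fin cq cl nk])
  show "sep_number (range (\<lambda>a. (cantor_pt a, HF a))) n \<le> 12^k"
    by (rule upper_generic(2)[OF fin cq cl nk])
qed
lemma sep_small:
  assumes "i < 2*k" "a i \<noteq> b i"
  shows "\<bar>cantor_pt a - cantor_pt b\<bar> \<ge> 1 / (2 * 9^k)"
proof -
  have "a \<noteq> b" using assms by auto
  from first_diff[OF this] obtain i0 where h: "\<forall>i<i0. a i = b i" "a i0 \<noteq> b i0" by blast
  have "i0 \<le> i" using h assms(2) not_le by blast
  then have "(3::real)^(i0+1) \<le> 3^(2*k)" using assms(1) by (intro power_increasing) auto
  then have "1/(2*3^(2*k)) \<le> (1::real)/(2*3^(i0+1))" by (intro divide_left_mono) auto
  moreover have "\<bar>cantor_pt a - cantor_pt b\<bar> \<ge> 1 / (2 * 3^(i0+1))" using cp_sep h by blast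
  ultimately show ?thesis unfolding power9 by linarith
qed

lemma sep_r:
  assumes r: "r \<le> 1"
    and pa: "\<And>i. 2*k \<le> i \<Longrightarrow> a i \<Longrightarrow> i < 4*k \<and> i mod 2 = r"
    and pb: "\<And>i. 2*k \<le> i \<Longrightarrow> b i \<Longrightarrow> i < 4*k \<and> i mod 2 = r"
    and ne: "a \<noteq> b"
  shows "\<bar>cantor_pt a - cantor_pt b\<bar> \<ge> 1 / (2 * 9^k) \<or> \<bar>Hr r a - Hr r b\<bar> \<ge> 1 / (2 * 9^k)"
proof (cases "\<exists>i<2*k. a i \<noteq> b i")
  case True
  then obtain i where "i < 2*k" "a i \<noteq> b i" by blast
  then have "\<bar>cantor_pt a - cantor_pt b\<bar> \<ge> 1 / (2 * 9^k)" by (rule sep_small)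
  then show ?thesis ..
next
  case False
  have ag: "a i = b i" if "i < 2*k" for i using False that by auto
  have "(\<lambda>j. a (2*j + r)) \<noteq> (\<lambda>j. b (2*j + r))"
  proof
    assume eq: "(\<lambda>j. a (2*j + r)) = (\<lambda>j. b (2*j + r))"
    have "a i = b i" for i
    proof (cases "i < 2*k")
      case True then show ?thesis by (rule ag)
    next
      case F: False
      show ?thesis
      proof (cases "i mod 2 = r")
        case True
        then have "i = 2*(i div 2) + r" by arith
        then show ?thesis using fun_cong[OF eq, of "i div 2"] by simp
      next
        case False
        then show ?thesis using pa[of i] pb[of i] F by auto
      qed
    qed
    then show False using ne by auto
  qed
  from first_diff[OF this] obtain j0 where h: "\<forall>j<j0. a (2*j + r) = b (2*j + r)" "a (2*j0 + r) \<noteq> b (2*j0 + r)"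
    by blast
  have "2*j0 + r \<ge> 2*k" using ag[of "2*j0+r"] h(2) by linarith
  moreover have "a (2*j0 + r) \<or> b (2*j0 + r)" using h(2) by blast
  ultimately have "2*j0 + r < 4*k" using pa[of "2*j0+r"] pb[of "2*j0+r"] by auto
  then have j0: "j0 + 1 \<le> 2*k" by arith
  then have "(3::real)^(j0+1) \<le> 3^(2*k)" by (intro power_increasing) auto
  then have "1/(2*3^(2*k)) \<le> (1::real)/(2*3^(j0+1))" by (intro divide_left_mono) auto
  moreover have "\<bar>Hr r a - Hr r b\<bar> \<ge> 1 / (2 * 3^(j0+1))" unfolding Hr_def
    by (rule cp_sep) (use h in auto)
  ultimately show ?thesis unfolding power9 by linarith
qed

definition bldr :: "nat \<Rightarrow> nat \<Rightarrow> (nat \<Rightarrow> bool) \<times> (nat \<Rightarrow> bool) \<Rightarrow> nat \<Rightarrow> bool" where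
  "bldr k r uv i = (if i < 2*k then fst uv i else if i < 4*k \<and> i mod 2 = r then snd uv (i div 2 - k) else False)"

lemma lower_r:
  assumes r: "r \<le> 1" and nk: "2 * 9^k < (2::nat)^n"
    and bdd: "bdd_above (sepset (range (\<lambda>a. (cantor_pt a, Hr r a))) n)"
  shows "8^k \<le> sep_number (range (\<lambda>a. (cantor_pt a, Hr r a))) n"
proof -
  let ?D = "PiE {..<2*k} (\<lambda>_. UNIV :: bool set) \<times> PiE {..<k} (\<lambda>_. UNIV :: bool set)"
  have finD: "finite ?D" by (intro finite_cartesian_product finite_PiE) auto
  have cD: "card ?D = 8^k"
  proof -
    have "card ?D = 2^(2*k) * 2^k" by (simp add: card_cartesian_product card_bool_PiE)
    also have "(2::nat)^(2*k) = 4^k" by (simp add: power_mult)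
    also have "(4::nat)^k * 2^k = 8^k" by (simp flip: power_mult_distrib)
    finally show ?thesis .
  qed
  have inj: "inj_on (bldr k r) ?D"
  proof (rule inj_onI)
    fix x y assume x: "x \<in> ?D" and y: "y \<in> ?D" and eq: "bldr k r x = bldr k r y"
    obtain u v where uv: "x = (u, v)" by fastforce
    obtain u' v' where uv': "y = (u', v')" by fastforce
    have "u = u'"
    proof (rule PiE_ext)
      show "u \<in> PiE {..<2*k} (\<lambda>_. UNIV)" "u' \<in> PiE {..<2*k} (\<lambda>_. UNIV)" using x y uv uv' by auto
      fix i assume "i \<in> {..<2*k}"
      then show "u i = u' i" using fun_cong[OF eq, of i] uv uv' by (simp add: bldr_def)
    qed
    moreover have "v = v'"
    proof (rule PiE_ext)
      show "v \<in> PiE {..<k} (\<lambda>_. UNIV)" "v' \<in> PiE {..<k} (\<lambda>_. UNIV)" using x y uv uv' by auto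
      fix j assume j: "j \<in> {..<k}"
      define i where "i = 2*(j+k) + r"
      have i1: "\<not> i < 2*k" "i < 4*k" "i div 2 - k = j" using j r unfolding i_def by auto
      have i2: "i mod 2 = r" using r unfolding i_def by presburger
      show "v j = v' j" using fun_cong[OF eq, of i] uv uv' i1 i2 by (simp add: bldr_def)
    qed
    ultimately show "x = y" using uv uv' by simp
  qed
  show ?thesis
  proof (rule lower_generic[where A="bldr k r ` ?D" and k=k])
    show "finite (bldr k r ` ?D)" using finD by simp
    show "8^k \<le> card (bldr k r ` ?D)" using card_image[OF inj] cD by simp
    show "2 * 9^k < (2::nat)^n" by (rule nk)
    show "bdd_above (sepset (range (\<lambda>a. (cantor_pt a, Hr r a))) n)" by (rule bdd)
    fix a b assume a: "a \<in> bldr k r ` ?D" and b: "b \<in> bldr k r ` ?D" and ne: "a \<noteq> b"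
    have p: "\<And>i. 2*k \<le> i \<Longrightarrow> c i \<Longrightarrow> i < 4*k \<and> i mod 2 = r" if "c \<in> bldr k r ` ?D" for c
    proof -
      from that obtain x where "c = bldr k r x" by blast
      then show "\<And>i. 2*k \<le> i \<Longrightarrow> c i \<Longrightarrow> i < 4*k \<and> i mod 2 = r"
        by (simp add: bldr_def split: if_splits)
    qed
    show "\<bar>cantor_pt a - cantor_pt b\<bar> \<ge> 1 / (2 * 9^k) \<or> \<bar>Hr r a - Hr r b\<bar> \<ge> 1 / (2 * 9^k)"
      by (rule sep_r[OF r p[OF a] p[OF b] ne])
  qed
qed
lemma sep_F:
  assumes za: "\<And>i. 4*k \<le> i \<Longrightarrow> \<not> a i" and zb: "\<And>i. 4*k \<le> i \<Longrightarrow> \<not> b i"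
    and pa: "\<And>j. k \<le> j \<Longrightarrow> a (2*j+1) \<Longrightarrow> a (2*j)"
    and pb: "\<And>j. k \<le> j \<Longrightarrow> b (2*j+1) \<Longrightarrow> b (2*j)"
    and ne: "a \<noteq> b"
  shows "\<bar>cantor_pt a - cantor_pt b\<bar> \<ge> 1 / (2 * 9^k) \<or> \<bar>HF a - HF b\<bar> \<ge> 1 / (2 * 9^k)"
proof (cases "\<exists>i<2*k. a i \<noteq> b i")
  case True
  then obtain i where "i < 2*k" "a i \<noteq> b i" by blast
  then have "\<bar>cantor_pt a - cantor_pt b\<bar> \<ge> 1 / (2 * 9^k)" by (rule sep_small)
  then show ?thesis ..
next
  case False
  have ag: "a i = b i" if "i < 2*k" for i using False that by auto
  have "sF a \<noteq> sF b"
  proof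
    assume eq: "sF a = sF b"
    have "a i = b i" for i
    proof (cases "i < 2*k")
      case True then show ?thesis by (rule ag)
    next
      case F: False
      define j where "j = i div 2"
      have jk: "k \<le> j" using F unfolding j_def by arith
      have s: "sF a j = sF b j" using eq by simp
      have "a (2*j) = b (2*j) \<and> a (2*j+1) = b (2*j+1)"
        using s pa[OF jk] pb[OF jk] by (auto simp: sF_def split: if_splits)
      moreover have "i = 2*j \<or> i = 2*j+1" unfolding j_def by arith
      ultimately show ?thesis by auto
    qed
    then show False using ne by auto
  qed
  from first_diff[OF this] obtain j0 where h: "\<forall>j<j0. sF a j = sF b j" "sF a j0 \<noteq> sF b j0"
    by blast
  have z0: "sF a j = 0" "sF b j = 0" if "2*k \<le> j" for j
    using za[of "2*j"] za[of "2*j+1"] zb[of "2*j"] zb[of "2*j+1"] that by (auto simp: sF_def)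
  have j0: "j0 < 2*k"
  proof (rule ccontr)
    assume "\<not> j0 < 2*k" then show False using z0[of j0] h(2) by simp
  qed
  have "\<bar>HF a - HF b\<bar> \<ge> 1 / 3^(2*k)"
    unfolding HF_diff
  proof (rule fin_lower[where p=j0])
    fix j show "\<bar>real (sF a j) - real (sF b j)\<bar> \<le> 2" using sF_le[of a j] sF_le[of b j] by linarith
  next
    fix j assume "j < j0" then show "real (sF a j) - real (sF b j) = 0" using h(1) by simp
  next
    fix j assume "2*k \<le> j" then show "real (sF a j) - real (sF b j) = 0" using z0 by simp
  next
    have "sF a j0 < sF b j0 \<or> sF b j0 < sF a j0" using h(2) by arith
    then show "\<bar>real (sF a j0) - real (sF b j0)\<bar> \<ge> 1" by auto
  next
    show "j0 < 2*k" by (rule j0)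
  qed
  moreover have "(1::real) / (2 * 9^k) \<le> 1 / 3^(2*k)" unfolding power9 by (simp add: field_simps)
  ultimately show ?thesis by linarith
qed

definition bldF :: "nat \<Rightarrow> (nat \<Rightarrow> bool) \<times> (nat \<Rightarrow> nat) \<Rightarrow> nat \<Rightarrow> bool" where
  "bldF k uv i = (if i < 2*k then fst uv i else if i < 4*k then
     (if i mod 2 = 0 then 1 \<le> snd uv (i div 2 - k) else 2 \<le> snd uv (i div 2 - k)) else False)"

lemma bldF_odd: "k \<le> j \<Longrightarrow> bldF k x (2*j+1) = (2*j+1 < 4*k \<and> 2 \<le> snd x (j-k))"
proof -
  assume j: "k \<le> j"
  have a1: "(2*j+1 < 2*k) = False" using j by simp
  have m1: "(2*j+1) mod 2 = 1" and m2: "(2*j+1) div 2 = j" by presburger+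
  show ?thesis unfolding bldF_def by (simp only: a1 m1 m2 if_False) simp
qed

lemma bldF_even: "k \<le> j \<Longrightarrow> bldF k x (2*j) = (2*j < 4*k \<and> 1 \<le> snd x (j-k))"
proof -
  assume j: "k \<le> j"
  have a1: "(2*j < 2*k) = False" using j by simp
  have m1: "(2*j) mod 2 = 0" and m2: "(2*j) div 2 = j" by presburger+
  show ?thesis unfolding bldF_def by (simp only: a1 m1 m2 if_False if_True) simp
qed

lemma lower_F:
  assumes nk: "2 * 9^k < (2::nat)^n"
    and bdd: "bdd_above (sepset (range (\<lambda>a. (cantor_pt a, HF a))) n)"
  shows "12^k \<le> sep_number (range (\<lambda>a. (cantor_pt a, HF a))) n"
proof -
  let ?D = "PiE {..<2*k} (\<lambda>_. UNIV :: bool set) \<times> PiE {..<k} (\<lambda>_. {0,1,2::nat})"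
  have finD: "finite ?D" by (intro finite_cartesian_product finite_PiE) auto
  have cD: "card ?D = 12^k"
  proof -
    have "card ?D = 2^(2*k) * 3^k" by (simp only: card_cartesian_product card_bool_PiE card_012_PiE)
    also have "(2::nat)^(2*k) = 4^k" by (simp add: power_mult)
    also have "(4::nat)^k * 3^k = 12^k" by (simp flip: power_mult_distrib)
    finally show ?thesis .
  qed
  have inj: "inj_on (bldF k) ?D"
  proof (rule inj_onI)
    fix x y assume x: "x \<in> ?D" and y: "y \<in> ?D" and eq: "bldF k x = bldF k y"
    obtain u v where uv: "x = (u, v)" by fastforce
    obtain u' v' where uv': "y = (u', v')" by fastforce
    have xD: "u \<in> PiE {..<2*k} (\<lambda>_. UNIV) \<and> v \<in> PiE {..<k} (\<lambda>_. {0,1,2})"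
      using x unfolding uv mem_Times_iff fst_conv snd_conv .
    have yD: "u' \<in> PiE {..<2*k} (\<lambda>_. UNIV) \<and> v' \<in> PiE {..<k} (\<lambda>_. {0,1,2})"
      using y unfolding uv' mem_Times_iff fst_conv snd_conv .
    have "u = u'"
    proof (rule PiE_ext)
      show "u \<in> PiE {..<2*k} (\<lambda>_. UNIV)" "u' \<in> PiE {..<2*k} (\<lambda>_. UNIV)" using xD yD by simp_all
      fix i assume "i \<in> {..<2*k}"
      then show "u i = u' i" using fun_cong[OF eq, of i] uv uv' by (simp add: bldF_def)
    qed
    moreover have "v = v'"
    proof (rule PiE_ext)
      show vv: "v \<in> PiE {..<k} (\<lambda>_. {0,1,2})" "v' \<in> PiE {..<k} (\<lambda>_. {0,1,2})" using xD yD by simp_all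
      fix j assume j: "j \<in> {..<k}"
      have "v j \<in> {0,1,2}" "v' j \<in> {0,1,2}" using PiE_mem[OF vv(1) j] PiE_mem[OF vv(2) j] by simp_all
      then have vj: "v j \<le> 2" "v' j \<le> 2" by auto
      have jk: "k \<le> j + k" by simp
      have lt: "2*(j+k)+1 < 4*k" "2*(j+k) < 4*k" using j by auto
      have "(1 \<le> v j) = (1 \<le> v' j)" using fun_cong[OF eq, of "2*(j+k)"] uv uv' lt
        unfolding bldF_even[OF jk] by simp
      moreover have "(2 \<le> v j) = (2 \<le> v' j)" using fun_cong[OF eq, of "2*(j+k)+1"] uv uv' lt
        unfolding bldF_odd[OF jk] by simp
      ultimately show "v j = v' j" using vj by arith
    qed
    ultimately show "x = y" using uv uv' by simp
  qed
  show ?thesis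
  proof (rule lower_generic[where A="bldF k ` ?D" and k=k])
    show "finite (bldF k ` ?D)" using finD by simp
    show "12^k \<le> card (bldF k ` ?D)" using card_image[OF inj] cD by simp
    show "2 * 9^k < (2::nat)^n" by (rule nk)
    show "bdd_above (sepset (range (\<lambda>a. (cantor_pt a, HF a))) n)" by (rule bdd)
    fix a b assume a: "a \<in> bldF k ` ?D" and b: "b \<in> bldF k ` ?D" and ne: "a \<noteq> b"
    have p1: "\<And>i. 4*k \<le> i \<Longrightarrow> \<not> c i" if "c \<in> bldF k ` ?D" for c
    proof -
      from that obtain x where "c = bldF k x" by blast
      then show "\<And>i. 4*k \<le> i \<Longrightarrow> \<not> c i" by (simp add: bldF_def)
    qed
    have p2: "\<And>j. k \<le> j \<Longrightarrow> c (2*j+1) \<Longrightarrow> c (2*j)" if "c \<in> bldF k ` ?D" for c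
    proof -
      from that obtain x where c: "c = bldF k x" by blast
      fix j assume j: "k \<le> j" and c1: "c (2*j+1)"
      from c1 have h: "2*j+1 < 4*k" "2 \<le> snd x (j - k)" unfolding c bldF_odd[OF j] by simp_all
      then show "c (2*j)" unfolding c bldF_even[OF j] by simp
    qed
    show "\<bar>cantor_pt a - cantor_pt b\<bar> \<ge> 1 / (2 * 9^k) \<or> \<bar>HF a - HF b\<bar> \<ge> 1 / (2 * 9^k)"
      by (rule sep_F[OF p1[OF a] p1[OF b] p2[OF a] p2[OF b] ne])
  qed
qed
lemma pow9_theta: "(9::real) powr (real n * (ln 2 / ln 9)) = 2^n"
proof -
  have "(9::real) powr (real n * (ln 2 / ln 9)) = exp (real n * (ln 2 / ln 9) * ln 9)"
    by (simp add: powr_def)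
  also have "real n * (ln 2 / ln 9) * ln 9 = real n * ln (2::real)" by simp
  also have "exp (real n * ln (2::real)) = 2 powr real n" by (simp add: powr_def mult.commute)
  also have "\<dots> = 2^n" by (simp add: powr_realpow)
  finally show ?thesis .
qed

lemma lim_aux: "c > 0 \<Longrightarrow> ((\<lambda>n. (real n * th + b) * lq / (real n * c)) \<longlongrightarrow> th * lq / c) sequentially"
proof -
  assume c: "c > 0"
  have "((\<lambda>n. th * lq / c + (b * lq / c) * inverse (real n)) \<longlongrightarrow> th * lq / c + (b * lq / c) * 0) sequentially"
    by (intro tendsto_intros lim_inverse_n)
  then have 1: "((\<lambda>n. th * lq / c + (b * lq / c) * inverse (real n)) \<longlongrightarrow> th * lq / c) sequentially" by simp
  show ?thesis
  proof (rule Lim_transform_eventually[OF 1])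
    show "\<forall>\<^sub>F n in sequentially. th * lq / c + b * lq / c * inverse (real n) = (real n * th + b) * lq / (real n * c)"
      using eventually_gt_at_top[of 0] by eventually_elim (use c in \<open>simp add: field_simps\<close>)
  qed
qed

lemma dim_generic:
  fixes N :: "nat \<Rightarrow> nat" and q :: nat
  assumes q: "q \<ge> 2"
   and U: "\<And>n k. 3 * 2^n \<le> (9::nat)^k \<Longrightarrow> N n \<le> q^k"
   and L: "\<And>n k. 2 * 9^k < (2::nat)^n \<Longrightarrow> q^k \<le> N n"
  shows "limsup (\<lambda>n. ereal (ln (real (N n)) / (real n * ln 2))) = ereal (ln q / ln 9)"
proof -
  define th :: real where "th = ln 2 / ln 9"
  have thpos: "th > 0" unfolding th_def by simp
  have lq: "ln (real q) > 0" using q by simp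
  have ln2: "ln (2::real) > 0" by simp
  have bounds: "(real n * th - 2) * ln q \<le> ln (real (N n)) \<and> ln (real (N n)) \<le> (real n * th + 2) * ln q"
    if nt: "real n * th \<ge> 2" for n
  proof -
    define t where "t = real n * th"
    have t0: "t \<ge> 2" using nt unfolding t_def .
    have p9: "(9::real) powr t = 2^n" unfolding t_def th_def by (rule pow9_theta)
    define ku where "ku = nat \<lceil>t\<rceil> + 1"
    have ku1: "real ku \<ge> t + 1" "real ku \<le> t + 2" unfolding ku_def using t0
      by (simp_all add: of_nat_nat) linarith+
    have "(9::real) powr (t + 1) \<le> 9 powr real ku" using ku1 by (intro powr_mono) auto
    then have "9 * 2^n \<le> (9::real)^ku" by (simp add: powr_add p9 powr_realpow)
    moreover have "(0::real) \<le> 2^n" by simp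
    ultimately have "real (3 * 2^n) \<le> real ((9::nat)^ku)"
      by (simp only: of_nat_mult of_nat_power of_nat_numeral)
    then have "3 * 2^n \<le> (9::nat)^ku" by linarith
    from U[OF this] have Nu: "N n \<le> q^ku" .
    define kl where "kl = nat (\<lfloor>t\<rfloor> - 1)"
    have kl1: "real kl \<le> t - 1" "real kl \<ge> t - 2" unfolding kl_def using t0
      by (simp_all add: of_nat_nat) linarith+
    have "(9::real) powr real kl \<le> 9 powr (t - 1)" using kl1 by (intro powr_mono) auto
    then have "9 * (9::real)^kl \<le> 2^n" by (simp add: powr_diff p9 powr_realpow field_simps)
    moreover have "(0::real) < 9^kl" by simp
    ultimately have "2 * (9::real)^kl < 2^n" by linarith
    then have "real (2 * 9^kl) < real ((2::nat)^n)"
      by (simp only: of_nat_mult of_nat_power of_nat_numeral)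
    then have "2 * 9^kl < (2::nat)^n" by linarith
    from L[OF this] have Nl: "q^kl \<le> N n" .
    have qkl: "real q ^ kl \<ge> 1" using q by simp
    have Npos: "real (N n) > 0" using Nl qkl
      by (metis less_le_trans of_nat_le_iff of_nat_power zero_less_one linorder_not_less order.trans)
    have "ln (real (N n)) \<le> ln (real q ^ ku)"
      using Nu Npos q by (subst ln_le_cancel_iff) (auto simp flip: of_nat_power)
    also have "\<dots> = real ku * ln q" using q by (simp add: ln_realpow)
    also have "\<dots> \<le> (t + 2) * ln q" using ku1 lq by (intro mult_right_mono) auto
    finally have up: "ln (real (N n)) \<le> (t + 2) * ln q" .
    have "(t - 2) * ln q \<le> real kl * ln q" using kl1 lq by (intro mult_right_mono) auto
    also have "\<dots> = ln (real q ^ kl)" using q by (simp add: ln_realpow)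
    also have "\<dots> \<le> ln (real (N n))"
      using Nl Npos q by (subst ln_le_cancel_iff) (auto simp flip: of_nat_power)
    finally have lo: "(t - 2) * ln q \<le> ln (real (N n))" .
    show ?thesis using up lo unfolding t_def by simp
  qed
  define r where "r n = ln (real (N n)) / (real n * ln 2)" for n
  have ev: "\<forall>\<^sub>F n in sequentially. real n * th \<ge> 2 \<and> real n > 0"
  proof -
    obtain n0 :: nat where n0: "real n0 > 2 / th" using reals_Archimedean2 by blast
    show ?thesis unfolding eventually_sequentially
    proof (intro exI[of _ n0] allI impI)
      fix n assume "n0 \<le> n"
      then have "real n > 2 / th" using n0 by (meson less_le_trans of_nat_le_iff)
      then have nn: "real n > 2 / th" .
      have "2/th > 0" using thpos by simp
      then have "real n > 0" using nn by linarith
      moreover have "real n * th > 2" using nn thpos by (simp add: field_simps)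
      ultimately show "real n * th \<ge> 2 \<and> real n > 0" by simp
    qed
  qed
  have lim: "(r \<longlonglongrightarrow> th * ln q / ln 2)"
  proof (rule tendsto_sandwich)
    show "\<forall>\<^sub>F n in sequentially. (real n * th + (-2)) * ln q / (real n * ln 2) \<le> r n"
      using ev
    proof eventually_elim
      case (elim n)
      then show ?case using bounds[of n] ln2 unfolding r_def
        by (intro divide_right_mono) (auto simp: algebra_simps)
    qed
    show "\<forall>\<^sub>F n in sequentially. r n \<le> (real n * th + 2) * ln q / (real n * ln 2)"
      using ev
    proof eventually_elim
      case (elim n)
      then show ?case using bounds[of n] ln2 unfolding r_def
        by (intro divide_right_mono) (auto simp: algebra_simps)
    qed
    show "((\<lambda>n. (real n * th + (-2)) * ln q / (real n * ln 2)) \<longlongrightarrow> th * ln q / ln 2) sequentially"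
      by (rule lim_aux[OF ln2])
    show "((\<lambda>n. (real n * th + 2) * ln q / (real n * ln 2)) \<longlongrightarrow> th * ln q / ln 2) sequentially"
      by (rule lim_aux[OF ln2])
  qed
  have "th * ln q / ln 2 = ln q / ln 9" unfolding th_def by (simp add: field_simps)
  then have "((\<lambda>n. ereal (r n)) \<longlongrightarrow> ereal (ln q / ln 9)) sequentially"
    using lim by (simp add: tendsto_ereal)
  then show ?thesis unfolding r_def by (intro lim_imp_Limsup) simp_all
qed
lemma bdd_any:
  assumes "\<And>n k. 3 * 2^n \<le> (9::nat)^k \<Longrightarrow> bdd_above (sepset X n)"
  shows "bdd_above (sepset X n)"
proof (rule assms[of n "n+1"])
  have "(2::nat)^n \<le> 9^n" by (rule power_mono) auto
  then show "3 * 2^n \<le> (9::nat)^(n+1)" by simp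
qed

lemma graph_F: "graph_on cantorK (\<lambda>x. cantor_f x + cantor_g x) = range (\<lambda>a. (cantor_pt a, HF a))"
  unfolding graph_on_def cantorK_def using HF_eq by auto

lemma graph_f: "graph_on cantorK cantor_f = range (\<lambda>a. (cantor_pt a, Hr 0 a))"
  unfolding graph_on_def cantorK_def by (auto simp: cf_eq Hf_def Hr_def)

lemma graph_g: "graph_on cantorK cantor_g = range (\<lambda>a. (cantor_pt a, Hr 1 a))"
  unfolding graph_on_def cantorK_def by (auto simp: cg_eq Hg_def Hr_def)

lemma dim_r:
  assumes r: "r \<le> 1"
  shows "upper_box_dim (range (\<lambda>a. (cantor_pt a, Hr r a))) = ereal (ln 8 / ln 9)"
proof -
  have "limsup (\<lambda>n. ereal (ln (real (sep_number (range (\<lambda>a. (cantor_pt a, Hr r a))) n)) / (real n * ln 2)))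
        = ereal (ln (real (8::nat)) / ln 9)"
  proof (rule dim_generic)
    show "(2::nat) \<le> 8" by simp
    fix n k
    show "3 * 2^n \<le> (9::nat)^k \<Longrightarrow> sep_number (range (\<lambda>a. (cantor_pt a, Hr r a))) n \<le> 8^k"
      by (rule upper_r(2)[OF r])
    show "2 * 9^k < (2::nat)^n \<Longrightarrow> 8^k \<le> sep_number (range (\<lambda>a. (cantor_pt a, Hr r a))) n"
    proof -
      assume h: "2 * 9^k < (2::nat)^n"
      show ?thesis by (rule lower_r[OF r h bdd_any]) (rule upper_r(1)[OF r])
    qed
  qed
  then show ?thesis unfolding upper_box_dim_def by simp
qed

lemma dim_F:
  shows "upper_box_dim (range (\<lambda>a. (cantor_pt a, HF a))) = ereal (ln 12 / ln 9)"
proof -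
  have "limsup (\<lambda>n. ereal (ln (real (sep_number (range (\<lambda>a. (cantor_pt a, HF a))) n)) / (real n * ln 2)))
        = ereal (ln (real (12::nat)) / ln 9)"
  proof (rule dim_generic)
    show "(2::nat) \<le> 12" by simp
    fix n k
    show "3 * 2^n \<le> (9::nat)^k \<Longrightarrow> sep_number (range (\<lambda>a. (cantor_pt a, HF a))) n \<le> 12^k"
      by (rule upper_F(2))
    show "2 * 9^k < (2::nat)^n \<Longrightarrow> 12^k \<le> sep_number (range (\<lambda>a. (cantor_pt a, HF a))) n"
    proof -
      assume h: "2 * 9^k < (2::nat)^n"
      show ?thesis by (rule lower_F[OF h bdd_any]) (rule upper_F(1))
    qed
  qed
  then show ?thesis unfolding upper_box_dim_def by simp
qed

lemma ln_facts:
  "ln 12 / ln 9 = 1/2 + ln 2 / ln (3::real)" "1/2 + ln 2 / ln 3 > (1::real)" "ln 8 / ln 9 < (1::real)"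
proof -
  have l12: "ln (12::real) = 2 * ln 2 + ln 3"
  proof -
    have "ln (12::real) = ln (2*2*3)" by simp
    also have "ln (2*2*3::real) = ln (2*2) + ln 3" by (subst ln_mult) simp
    also have "ln (2*2::real) = ln 2 + ln 2" by (subst ln_mult) simp
    finally show ?thesis by simp
  qed
  have l9: "ln (9::real) = 2 * ln 3"
  proof -
    have "ln (9::real) = ln (3*3)" by simp
    also have "ln (3*3::real) = ln 3 + ln 3" by (subst ln_mult) simp
    finally show ?thesis by simp
  qed
  have l3: "ln (3::real) > 0" by simp
  show "ln 12 / ln 9 = 1/2 + ln 2 / ln (3::real)" unfolding l12 l9 using l3 by (simp add: field_simps)
  have l4: "ln (4::real) = 2 * ln 2"
  proof -
    have "ln (4::real) = ln (2*2)" by simp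
    also have "ln (2*2::real) = ln 2 + ln 2" by (subst ln_mult) simp
    finally show ?thesis by simp
  qed
  have "ln (3::real) < ln 4" by simp
  then have "ln 3 < 2 * ln (2::real)" using l4 by simp
  then show "1/2 + ln 2 / ln 3 > (1::real)" using l3 by (simp add: field_simps)
  have "ln (8::real) < ln 9" by simp
  moreover have "ln (9::real) > 0" by simp
  ultimately show "ln 8 / ln 9 < (1::real)" by simp
qed

theorem mainTheorem3:
  shows "continuous_on cantorK cantor_f \<and> continuous_on cantorK cantor_g \<and>
    upper_box_dim (graph_on cantorK (\<lambda>x. cantor_f x + cantor_g x)) = ereal (1/2 + ln 2 / ln 3) \<and>
    1/2 + ln 2 / ln 3 > (1::real) \<and>
    upper_box_dim (graph_on cantorK cantor_f) = ereal (ln 8 / ln 9) \<and>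
    upper_box_dim (graph_on cantorK cantor_g) = ereal (ln 8 / ln 9) \<and>
    ln 8 / ln 9 < (1::real)"
  using cont_f cont_g dim_F dim_r[of 0] dim_r[of 1] ln_facts
  unfolding graph_F graph_f graph_g by simp

end
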